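(* For every $n\ge2$, $$\sum_{T}\ \sum_{\{u,w\}\ni e_T} d(u,w)=\binom n2 c_{n-1}.$$ Here $T$ ranges over all plane trees on $n$ vertices, $e_T$ is the key edge of $T$, and $\{u,w\}$ ranges over unordered pairs of distinct vertices of $T$ whose connecting path contains $e_T$.
   Context: General (plane) trees are rooted trees in which each vertex may have any number of children, linearly ordered. The size of a tree is its number of vertices. The key edge of a plane tree with at least two vertices is the edge between the root and its leftmost (first) child. $d(u,w)$ is the number of edges of the path between $u$ and $w$. $c_{n-1}=\frac1n\binom{2n-2}{n-1}$ is the Catalan number. *)

theory Defs
  imports Complex_Main "HOL-Library.List_Lexorder"
begin

datatype ptree = Node "ptree list"

fun tsize :: "ptree \<Rightarrow> nat" where
  "tsize (Node ts) = Suc (sum_list (map tsize ts))"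

text \<open>Vertices are identified with their positions (Dewey addresses):
  the root is [], and i # p is vertex p of the i-th subtree (0-indexed).\<close>
function vertices :: "ptree \<Rightarrow> nat list set" where
  "vertices (Node ts) = insert [] (\<Union>i \<in> {..<length ts}. (#) i ` vertices (ts ! i))"
  by pat_completeness auto
termination
  by (relation "measure size") (auto simp: less_Suc_eq_le intro!: size_list_estimation' nth_mem)

text \<open>Longest common prefix of two positions (= their lowest common ancestor).\<close>
fun lcp :: "nat list \<Rightarrow> nat list \<Rightarrow> nat list" where
  "lcp (x # xs) (y # ys) = (if x = y then x # lcp xs ys else [])"
| "lcp _ _ = []"

text \<open>Edges of the path between u and w, each edge given as a (parent, child) pair.\<close>
definition path_edges :: "nat list \<Rightarrow> nat list \<Rightarrow> (nat list \<times> nat list) set" where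
  "path_edges u w =
     {(take k u, take (Suc k) u) | k. length (lcp u w) \<le> k \<and> k < length u} \<union>
     {(take k w, take (Suc k) w) | k. length (lcp u w) \<le> k \<and> k < length w}"

definition tdist :: "nat list \<Rightarrow> nat list \<Rightarrow> nat" where
  "tdist u w = card (path_edges u w)"

text \<open>The key edge: between the root and its leftmost child.\<close>
definition key_edge :: "nat list \<times> nat list" where
  "key_edge = ([], [0])"

text \<open>Unordered pairs {u,w} of distinct vertices whose path contains the key edge,
  each represented once as (u,w) with u < w (lexicographic order on positions).\<close>
definition key_pairs :: "ptree \<Rightarrow> (nat list \<times> nat list) set" where
  "key_pairs T = {(u, w). u \<in> vertices T \<and> w \<in> vertices T \<and> u < w \<and> key_edge \<in> path_edges u w}"

end

theory Submission
  imports Defs "HOL-Computational_Algebra.Formal_Power_Series"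
begin

unbundle fps_syntax

fun sh :: "nat list \<Rightarrow> nat list" where
  "sh [] = []" | "sh (i # p) = Suc i # p"

lemma sh_inj: "inj sh"
proof (rule injI)
  fix x y assume "sh x = sh y" then show "x = y" by (cases x; cases y) auto
qed

lemma sh_neq0[simp]: "sh q \<noteq> 0 # p" "0 # p \<noteq> sh q"
  by (cases q; auto)+

lemma length_sh[simp]: "length (sh p) = length p"
  by (cases p) auto

lemma ptree_induct2:
  assumes "P (Node [])" "\<And>A ts. P A \<Longrightarrow> P (Node ts) \<Longrightarrow> P (Node (A # ts))"
  shows "P T"
proof (induction T)
  case (Node ts)
  then show ?case by (induction ts) (auto intro: assms)
qed

lemma vert_nil[simp]: "vertices (Node []) = {[]}"
  by simp

declare vertices.simps[simp del]

lemma vert_cons: "vertices (Node (A # ts)) = (#) 0 ` vertices A \<union> sh ` vertices (Node ts)"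
proof -
  have e1: "vertices (Node (A # ts)) = insert [] ((#) 0 ` vertices A \<union> (\<Union>i \<in> {..<length ts}. (#) (Suc i) ` vertices (ts ! i)))"
    by (simp add: vertices.simps[of "A # ts"] lessThan_Suc_eq_insert_0 del: vertices.simps)
  have e2: "sh ` vertices (Node ts) = insert [] (\<Union>i \<in> {..<length ts}. (#) (Suc i) ` vertices (ts ! i))"
    by (simp add: vertices.simps[of ts] image_UN image_image del: vertices.simps)
  show ?thesis unfolding e1 e2 by blast
qed

lemma disj_VA_VB: "(#) 0 ` X \<inter> sh ` Y = {}"
  by auto

lemma vert_finite: "finite (vertices T)"
  by (induction T rule: ptree_induct2) (auto simp: vert_cons)

lemma tsize_cons: "tsize (Node (A # ts)) = tsize A + tsize (Node ts)"
  by simp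

lemma vert_card: "card (vertices T) = tsize T"
proof (induction T rule: ptree_induct2)
  case 1 then show ?case by simp
next
  case (2 A ts)
  have "card (vertices (Node (A # ts))) = card ((#) 0 ` vertices A) + card (sh ` vertices (Node ts))"
    unfolding vert_cons by (rule card_Un_disjoint) (simp_all add: vert_finite disj_VA_VB)
  also have "\<dots> = tsize A + tsize (Node ts)"
  proof -
    have "card ((#) (0::nat) ` vertices A) = card (vertices A)"
      by (rule card_image) (simp add: inj_on_def)
    moreover have "card (sh ` vertices (Node ts)) = card (vertices (Node ts))"
      by (rule card_image[OF inj_on_subset[OF sh_inj]]) simp
    ultimately show ?thesis using 2 by simp
  qed
  finally show ?case by (simp only: tsize_cons)
qed

definition ds :: "ptree \<Rightarrow> nat" where
  "ds T = (\<Sum>p \<in> vertices T. length p)"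

lemma ds_nil[simp]: "ds (Node []) = 0"
  by (simp add: ds_def)

lemma ds_cons: "ds (Node (A # ts)) = ds A + tsize A + ds (Node ts)"
proof -
  have e1: "ds (Node (A # ts)) = (\<Sum>p \<in> (#) 0 ` vertices A. length p) + (\<Sum>p \<in> sh ` vertices (Node ts). length p)"
    unfolding ds_def vert_cons by (rule sum.union_disjoint) (simp_all add: vert_finite disj_VA_VB)
  have e2: "(\<Sum>p \<in> (#) (0::nat) ` vertices A. length p) = (\<Sum>p \<in> vertices A. length p + 1)"
    by (simp add: sum.reindex inj_on_def)
  have e3: "(\<Sum>p \<in> vertices A. length p + 1) = ds A + tsize A"
    by (simp only: sum.distrib) (simp add: ds_def vert_card)
  have e4: "(\<Sum>p \<in> sh ` vertices (Node ts). length p) = ds (Node ts)"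
    unfolding ds_def by (simp add: sum.reindex inj_on_subset[OF sh_inj])
  show ?thesis using e1 e2 e3 e4 by simp
qed

lemma lcp_sym: "lcp u w = lcp w u"
  by (induction u w rule: lcp.induct) (auto elim: lcp.elims)

lemma path_edges_sym: "path_edges u w = path_edges w u"
  unfolding path_edges_def by (simp add: lcp_sym[of w u] Un_commute)

lemma tdist_sym: "tdist u w = tdist w u"
  unfolding tdist_def by (simp add: path_edges_sym)

lemma take_eq_Nil_iff': "take k u = [] \<longleftrightarrow> k = 0 \<or> u = []"
  by simp

lemma key_iff: "key_edge \<in> path_edges u w \<longleftrightarrow> lcp u w = [] \<and> ((\<exists>p. u = 0 # p) \<or> (\<exists>q. w = 0 # q))"
proof
  assume "key_edge \<in> path_edges u w"
  then have "key_edge \<in> {(take k u, take (Suc k) u) |k. length (lcp u w) \<le> k \<and> k < length u} \<or>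
             key_edge \<in> {(take k w, take (Suc k) w) |k. length (lcp u w) \<le> k \<and> k < length w}"
    unfolding path_edges_def by blast
  then show "lcp u w = [] \<and> ((\<exists>p. u = 0 # p) \<or> (\<exists>q. w = 0 # q))"
  proof
    assume "key_edge \<in> {(take k u, take (Suc k) u) |k. length (lcp u w) \<le> k \<and> k < length u}"
    then obtain k where h: "[] = take k u" "[0] = take (Suc k) u" "length (lcp u w) \<le> k" "k < length u"
      unfolding key_edge_def by blast
    then have "k = 0" by (metis take_eq_Nil less_zeroE list.size(3))
    with h show ?thesis by (cases u) auto
  next
    assume "key_edge \<in> {(take k w, take (Suc k) w) |k. length (lcp u w) \<le> k \<and> k < length w}"
    then obtain k where h: "[] = take k w" "[0] = take (Suc k) w" "length (lcp u w) \<le> k" "k < length w"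
      unfolding key_edge_def by blast
    then have "k = 0" by (metis take_eq_Nil less_zeroE list.size(3))
    with h show ?thesis by (cases w) auto
  qed
next
  assume h: "lcp u w = [] \<and> ((\<exists>p. u = 0 # p) \<or> (\<exists>q. w = 0 # q))"
  then show "key_edge \<in> path_edges u w"
  proof (cases "\<exists>p. u = 0 # p")
    case True
    then obtain p where "u = 0 # p" by blast
    then have "(take 0 u, take (Suc 0) u) = key_edge" "length (lcp u w) \<le> 0" "0 < length u"
      using h by (auto simp: key_edge_def)
    then show ?thesis by (simp only: path_edges_def Un_iff mem_Collect_eq) (rule disjI1, rule exI[of _ 0], simp)
  next
    case False
    then obtain q where "w = 0 # q" using h by blast
    then have "(take 0 w, take (Suc 0) w) = key_edge" "length (lcp u w) \<le> 0" "0 < length w"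
      using h by (auto simp: key_edge_def)
    then show ?thesis by (simp only: path_edges_def Un_iff mem_Collect_eq) (rule disjI2, rule exI[of _ 0], simp)
  qed
qed

lemma lcp_0_sh: "lcp (0 # p) (sh q) = []"
  by (cases q) auto

lemma sh_not0: "sh q \<noteq> 0 # r"
  by (cases q) auto

lemma inj_take: "inj_on (\<lambda>k. (take k u, take (Suc k) u)) {..<length u}"
proof (rule inj_onI)
  fix x y assume h: "x \<in> {..<length u}" "y \<in> {..<length u}"
    "(take x u, take (Suc x) u) = (take y u, take (Suc y) u)"
  then have "length (take x u) = length (take y u)" by simp
  then show "x = y" using h(1,2) by simp
qed

lemma tdist_AB: "tdist (0 # p) (sh q) = Suc (length p) + length q"
proof -
  let ?u = "0 # p" and ?w = "sh q"
  let ?f = "\<lambda>k. (take k ?u, take (Suc k) ?u)" and ?g = "\<lambda>k. (take k ?w, take (Suc k) ?w)"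
  have pe: "path_edges ?u ?w = ?f ` {..<length ?u} \<union> ?g ` {..<length ?w}"
    unfolding path_edges_def lcp_0_sh by auto
  have injf: "inj_on ?f {..<length ?u}" by (rule inj_take)
  have injg: "inj_on ?g {..<length ?w}" by (rule inj_take)
  have disj: "?f ` {..<length ?u} \<inter> ?g ` {..<length ?w} = {}"
  proof (rule ccontr)
    assume "?f ` {..<length ?u} \<inter> ?g ` {..<length ?w} \<noteq> {}"
    then obtain k j where "take (Suc k) ?u = take (Suc j) ?w" "j < length ?w" by auto
    then show False by (cases q) auto
  qed
  have "tdist ?u ?w = card (?f ` {..<length ?u}) + card (?g ` {..<length ?w})"
    unfolding tdist_def pe by (rule card_Un_disjoint[OF _ _ disj]) simp_all
  also have "\<dots> = length ?u + length ?w"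
    by (simp only: card_image[OF injf] card_image[OF injg] card_lessThan)
  finally show ?thesis by simp
qed

lemma key_AB: "key_edge \<in> path_edges (0 # p) (sh q)"
  by (simp add: key_iff lcp_0_sh)

lemma key_AA: "key_edge \<notin> path_edges (0 # p) (0 # q)"
  by (simp add: key_iff)

lemma key_BB: "key_edge \<notin> path_edges (sh p) (sh q)"
  by (simp add: key_iff sh_not0)

lemma sum_minmax:
  fixes X Y :: "'a :: linorder set"
  assumes "finite X" "finite Y" "X \<inter> Y = {}" "\<And>a b. f a b = f b a"
  shows "(\<Sum>(u, w) \<in> {(u, w). ((u \<in> X \<and> w \<in> Y) \<or> (u \<in> Y \<and> w \<in> X)) \<and> u < w}. f u w)
       = (\<Sum>u \<in> X. \<Sum>w \<in> Y. f u w)"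
proof -
  let ?g = "\<lambda>(a, b). (min a b, max a b)"
  have eq: "{(u, w). ((u \<in> X \<and> w \<in> Y) \<or> (u \<in> Y \<and> w \<in> X)) \<and> u < w} = ?g ` (X \<times> Y)"
  proof
    show "?g ` (X \<times> Y) \<subseteq> {(u, w). ((u \<in> X \<and> w \<in> Y) \<or> (u \<in> Y \<and> w \<in> X)) \<and> u < w}"
    proof clarify
      fix a b assume "a \<in> X" "b \<in> Y"
      then have "a \<noteq> b" using assms(3) by blast
      then show "(min a b \<in> X \<and> max a b \<in> Y \<or> min a b \<in> Y \<and> max a b \<in> X) \<and> min a b < max a b"
        using \<open>a \<in> X\<close> \<open>b \<in> Y\<close> by (cases "a < b") (auto simp: min_def max_def)
    qed
  next
    show "{(u, w). ((u \<in> X \<and> w \<in> Y) \<or> (u \<in> Y \<and> w \<in> X)) \<and> u < w} \<subseteq> ?g ` (X \<times> Y)"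
    proof clarify
      fix u w assume h: "(u \<in> X \<and> w \<in> Y) \<or> (u \<in> Y \<and> w \<in> X)" "u < w"
      show "(u, w) \<in> ?g ` (X \<times> Y)"
      proof (cases "u \<in> X \<and> w \<in> Y")
        case True
        then have "(u, w) = ?g (u, w)" using less_imp_le[OF h(2)] by (simp add: min_def max_def)
        then show ?thesis using True by blast
      next
        case False
        then have "u \<in> Y" "w \<in> X" using h by auto
        moreover have "(u, w) = ?g (w, u)" using h(2) less_imp_le[OF h(2)] by (simp add: min_def max_def)
        ultimately show ?thesis by blast
      qed
    qed
  qed
  have inj: "inj_on ?g (X \<times> Y)"
  proof (rule inj_onI)
    fix x y assume hx: "x \<in> X \<times> Y" "y \<in> X \<times> Y" "?g x = ?g y"
    obtain a b where x: "x = (a, b)" by (cases x)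
    obtain a' b' where y: "y = (a', b')" by (cases y)
    have h: "a \<in> X" "b \<in> Y" "a' \<in> X" "b' \<in> Y" "(min a b, max a b) = (min a' b', max a' b')"
      using hx x y by auto
    have "a \<noteq> b'" "a' \<noteq> b" using h assms(3) by auto
    then have "a = a' \<and> b = b'" using h(5) by (auto simp: min_def max_def split: if_splits)
    then show "x = y" using x y by simp
  qed
  have "(\<Sum>(u, w) \<in> ?g ` (X \<times> Y). f u w) = (\<Sum>x \<in> X \<times> Y. (\<lambda>(u, w). f u w) (?g x))"
    by (rule sum.reindex[OF inj, unfolded comp_def])
  also have "\<dots> = (\<Sum>(a, b) \<in> X \<times> Y. f a b)"
    by (rule sum.cong) (auto simp: min_def max_def assms(4))
  also have "\<dots> = (\<Sum>u \<in> X. \<Sum>w \<in> Y. f u w)"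
    by (rule sum.cartesian_product[symmetric])
  finally show ?thesis unfolding eq .
qed

definition kp :: "ptree \<Rightarrow> nat" where
  "kp T = (\<Sum>(u, w) \<in> key_pairs T. tdist u w)"

lemma key_cross:
  assumes "u \<in> (#) 0 ` X \<union> sh ` Y" "w \<in> (#) 0 ` X \<union> sh ` Y"
  shows "key_edge \<in> path_edges u w \<longleftrightarrow> (u \<in> (#) 0 ` X \<and> w \<in> sh ` Y) \<or> (u \<in> sh ` Y \<and> w \<in> (#) 0 ` X)"
proof -
  have d: "(#) 0 ` X \<inter> sh ` Y = {}" by (rule disj_VA_VB)
  show ?thesis
  proof (cases "u \<in> (#) 0 ` X")
    case True
    then obtain p where p: "u = 0 # p" by blast
    show ?thesis
    proof (cases "w \<in> (#) 0 ` X")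
      case True
      then obtain q where "w = 0 # q" by blast
      then show ?thesis using p key_AA d \<open>u \<in> (#) 0 ` X\<close> True by auto
    next
      case False
      then have "w \<in> sh ` Y" using assms by blast
      then obtain q where "w = sh q" by blast
      then show ?thesis using p key_AB \<open>u \<in> (#) 0 ` X\<close> \<open>w \<in> sh ` Y\<close> by simp
    qed
  next
    case False
    then have "u \<in> sh ` Y" using assms by blast
    then obtain p where p: "u = sh p" by blast
    show ?thesis
    proof (cases "w \<in> (#) 0 ` X")
      case True
      then obtain q where "w = 0 # q" by blast
      then show ?thesis using p key_AB[of q p] path_edges_sym[of "sh p"] True \<open>u \<in> sh ` Y\<close> by simp
    next
      case False
      then have "w \<in> sh ` Y" using assms by blast
      then obtain q where "w = sh q" by blast
      then show ?thesis using p key_BB \<open>\<not> u \<in> (#) 0 ` X\<close> False by auto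
    qed
  qed
qed

lemma key_pairs_cons: "key_pairs (Node (A # ts)) =
  {(u, w). ((u \<in> (#) 0 ` vertices A \<and> w \<in> sh ` vertices (Node ts)) \<or> (u \<in> sh ` vertices (Node ts) \<and> w \<in> (#) 0 ` vertices A)) \<and> u < w}"
  (is "_ = ?R")
proof (rule set_eqI)
  fix x :: "nat list \<times> nat list"
  obtain u w where x: "x = (u, w)" by (cases x)
  show "x \<in> key_pairs (Node (A # ts)) \<longleftrightarrow> x \<in> ?R"
    unfolding x key_pairs_def vert_cons mem_Collect_eq prod.case
    using key_cross[of u "vertices A" "vertices (Node ts)" w] by blast
qed

lemma kp_nil: "kp (Node []) = 0"
proof -
  have "key_pairs (Node []) = {}" unfolding key_pairs_def by auto
  then show ?thesis unfolding kp_def by simp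
qed

lemma sum_lin: "(\<Sum>p \<in> V. (c::nat) * (f p + 1) + d) = c * (sum f V + card V) + card V * d"
  by (simp add: sum.distrib sum_distrib_left algebra_simps)

lemma sum_const_plus: "(\<Sum>q \<in> V. c + f q) = card V * c + sum f V"
  by (simp add: sum.distrib)

lemma kp_cons: "kp (Node (A # ts)) = tsize (Node ts) * (ds A + tsize A) + tsize A * ds (Node ts)"
proof -
  let ?X = "(#) 0 ` vertices A" and ?Y = "sh ` vertices (Node ts)"
  have "kp (Node (A # ts)) = (\<Sum>u \<in> ?X. \<Sum>w \<in> ?Y. tdist u w)"
    unfolding kp_def key_pairs_cons
    by (rule sum_minmax) (simp_all add: vert_finite disj_VA_VB tdist_sym)
  also have "\<dots> = (\<Sum>p \<in> vertices A. \<Sum>w \<in> ?Y. tdist (0 # p) w)"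
    by (simp add: sum.reindex inj_on_def)
  also have "\<dots> = (\<Sum>p \<in> vertices A. \<Sum>q \<in> vertices (Node ts). Suc (length p) + length q)"
    by (simp add: sum.reindex inj_on_subset[OF sh_inj] tdist_AB)
  also have "\<dots> = (\<Sum>p \<in> vertices A. tsize (Node ts) * (length p + 1) + ds (Node ts))"
    by (simp only: sum_const_plus vert_card ds_def Suc_eq_plus1 mult.commute)
  also have "\<dots> = tsize (Node ts) * (ds A + tsize A) + tsize A * ds (Node ts)"
    by (simp only: sum_lin ds_def vert_card)
  finally show ?thesis .
qed

definition TS :: "nat \<Rightarrow> ptree set" where
  "TS n = {T. tsize T = n}"

lemma tsize_pos: "tsize T \<ge> 1"
  by (cases T) simp

lemma TS0: "TS 0 = {}"
  unfolding TS_def using tsize_pos by (auto simp: le_simps)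

lemma tsize1: "tsize T = 1 \<Longrightarrow> T = Node []"
proof (cases T)
  case (Node ts)
  assume h: "tsize T = 1"
  show ?thesis
  proof (cases ts)
    case (Cons A ts')
    then have "tsize T = tsize A + tsize (Node ts')" using Node by simp
    then show ?thesis using h tsize_pos[of A] tsize_pos[of "Node ts'"] by simp
  qed (use Node in simp)
qed

lemma TS1: "TS 1 = {Node []}"
  unfolding TS_def using tsize1 by auto

definition cns :: "ptree \<Rightarrow> ptree \<Rightarrow> ptree" where
  "cns A B = (case B of Node ts \<Rightarrow> Node (A # ts))"

lemma cns_Node[simp]: "cns A (Node ts) = Node (A # ts)"
  by (simp add: cns_def)

lemma tsize_cns: "tsize (cns A B) = tsize A + tsize B"
  by (cases B) simp

lemma ds_cns: "ds (cns A B) = ds A + tsize A + ds B"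
  by (cases B) (simp add: ds_cons)

lemma kp_cns: "kp (cns A B) = tsize B * (ds A + tsize A) + tsize A * ds B"
  by (cases B) (simp add: kp_cons)

lemma cns_inj: "inj (\<lambda>(A, B). cns A B)"
proof (rule injI, clarify)
  fix A B A' B' assume "cns A B = cns A' B'"
  then show "A = A' \<and> B = B'" by (cases B; cases B') simp
qed

lemma TS_dec: "n \<ge> 2 \<Longrightarrow> TS n = (\<lambda>(A, B). cns A B) ` (\<Union>a\<in>{0..n}. TS a \<times> TS (n - a))"
proof
  assume n: "n \<ge> 2"
  show "TS n \<subseteq> (\<lambda>(A, B). cns A B) ` (\<Union>a\<in>{0..n}. TS a \<times> TS (n - a))"
  proof
    fix T assume "T \<in> TS n"
    then have hT: "tsize T = n" by (simp add: TS_def)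
    obtain ts where T: "T = Node ts" by (cases T)
    show "T \<in> (\<lambda>(A, B). cns A B) ` (\<Union>a\<in>{0..n}. TS a \<times> TS (n - a))"
    proof (cases ts)
      case Nil then show ?thesis using hT n T by simp
    next
      case (Cons A ts')
      then have "T = cns A (Node ts')" using T by simp
      moreover have "tsize A + tsize (Node ts') = n" using hT T Cons by simp
      ultimately show ?thesis
        by (intro image_eqI[of _ _ "(A, Node ts')"]) (auto simp: TS_def intro!: bexI[of _ "tsize A"])
    qed
  qed
next
  show "(\<lambda>(A, B). cns A B) ` (\<Union>a\<in>{0..n}. TS a \<times> TS (n - a)) \<subseteq> TS n"
    by (auto simp: TS_def tsize_cns)
qed

lemma TS_finite: "finite (TS n)"
proof (induction n rule: less_induct)
  case (less n)
  show ?case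
  proof (cases "n \<ge> 2")
    case True
    have "finite (TS a \<times> TS (n - a))" if "a \<in> {0..n}" for a
    proof (cases "a = 0 \<or> a = n")
      case True then show ?thesis using TS0 by auto
    next
      case False
      then have "a < n" "n - a < n" using that by auto
      then show ?thesis using less by simp
    qed
    then show ?thesis unfolding TS_dec[OF True] by blast
  next
    case False
    then have "n = 0 \<or> n = 1" by auto
    then show ?thesis using TS0 TS1 by auto
  qed
qed

lemma TS_sum:
  assumes "n \<ge> 2"
  shows "(\<Sum>T \<in> TS n. f T) = (\<Sum>a = 0..n. \<Sum>A \<in> TS a. \<Sum>B \<in> TS (n - a). f (cns A B))"
proof -
  have "(\<Sum>T \<in> TS n. f T) = (\<Sum>x \<in> (\<Union>a\<in>{0..n}. TS a \<times> TS (n - a)). f ((\<lambda>(A, B). cns A B) x))"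
    unfolding TS_dec[OF assms] by (rule sum.reindex[OF inj_on_subset[OF cns_inj], unfolded comp_def]) simp
  also have "\<dots> = (\<Sum>a = 0..n. \<Sum>x \<in> TS a \<times> TS (n - a). f ((\<lambda>(A, B). cns A B) x))"
  proof (rule sum.UNION_disjoint)
    show "finite {0..n}" by simp
    show "\<forall>i\<in>{0..n}. finite (TS i \<times> TS (n - i))" using TS_finite by simp
    show "\<forall>i\<in>{0..n}. \<forall>j\<in>{0..n}. i \<noteq> j \<longrightarrow> (TS i \<times> TS (n - i)) \<inter> (TS j \<times> TS (n - j)) = {}"
      by (auto simp: TS_def)
  qed
  also have "\<dots> = (\<Sum>a = 0..n. \<Sum>A \<in> TS a. \<Sum>B \<in> TS (n - a). f (cns A B))"
    by (simp only: sum.cartesian_product prod.case_distrib)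
  finally show ?thesis .
qed




definition NN :: "nat \<Rightarrow> real" where "NN n = real (card (TS n))"
definition PP :: "nat \<Rightarrow> real" where "PP n = (\<Sum>T \<in> TS n. real (ds T))"
definition SS :: "nat \<Rightarrow> real" where "SS n = (\<Sum>T \<in> TS n. real (kp T))"

lemma NN0: "NN 0 = 0" and NN1: "NN 1 = 1"
  by (simp_all add: NN_def TS0 TS1[unfolded One_nat_def])
lemma PP0: "PP 0 = 0" and PP1: "PP 1 = 0"
  by (simp_all add: PP_def TS0 TS1[unfolded One_nat_def])
lemma SS0: "SS 0 = 0" and SS1: "SS 1 = 0"
  by (simp_all add: SS_def TS0 TS1[unfolded One_nat_def] kp_nil)

lemma dsum: "(\<Sum>A \<in> X. \<Sum>B \<in> Y. u * (g A + v) + w * h B)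
   = real (card Y) * u * (sum g X + v * real (card X)) + w * real (card X) * sum h Y"
  by (simp add: sum.distrib sum_distrib_left sum_distrib_right algebra_simps)

lemma NN_rec: "n \<ge> 2 \<Longrightarrow> NN n = (\<Sum>a = 0..n. NN a * NN (n - a))"
proof -
  assume n: "n \<ge> 2"
  have "NN n = (\<Sum>T \<in> TS n. 1)" by (simp add: NN_def)
  also have "\<dots> = (\<Sum>a = 0..n. \<Sum>A \<in> TS a. \<Sum>B \<in> TS (n - a). 1)" by (rule TS_sum[OF n])
  also have "\<dots> = (\<Sum>a = 0..n. NN a * NN (n - a))" by (simp add: NN_def)
  finally show ?thesis .
qed

lemma PP_rec: "n \<ge> 2 \<Longrightarrow> PP n = (\<Sum>a = 0..n. (PP a + real a * NN a) * NN (n - a) + NN a * PP (n - a))"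
proof -
  assume n: "n \<ge> 2"
  have "PP n = (\<Sum>a = 0..n. \<Sum>A \<in> TS a. \<Sum>B \<in> TS (n - a). real (ds (cns A B)))"
    unfolding PP_def by (rule TS_sum[OF n])
  also have "\<dots> = (\<Sum>a = 0..n. \<Sum>A \<in> TS a. \<Sum>B \<in> TS (n - a). 1 * (real (ds A) + real a) + 1 * real (ds B))"
    by (intro sum.cong refl) (simp add: ds_cns TS_def)
  also have "\<dots> = (\<Sum>a = 0..n. (PP a + real a * NN a) * NN (n - a) + NN a * PP (n - a))"
    by (simp only: dsum) (simp add: PP_def NN_def algebra_simps)
  finally show ?thesis .
qed

lemma SS_rec: "n \<ge> 2 \<Longrightarrow> SS n = (\<Sum>a = 0..n. (PP a + real a * NN a) * (real (n - a) * NN (n - a)) + (real a * NN a) * PP (n - a))"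
proof -
  assume n: "n \<ge> 2"
  have "SS n = (\<Sum>a = 0..n. \<Sum>A \<in> TS a. \<Sum>B \<in> TS (n - a). real (kp (cns A B)))"
    unfolding SS_def by (rule TS_sum[OF n])
  also have "\<dots> = (\<Sum>a = 0..n. \<Sum>A \<in> TS a. \<Sum>B \<in> TS (n - a). real (n - a) * (real (ds A) + real a) + real a * real (ds B))"
    by (intro sum.cong refl) (simp add: kp_cns TS_def)
  also have "\<dots> = (\<Sum>a = 0..n. (PP a + real a * NN a) * (real (n - a) * NN (n - a)) + (real a * NN a) * PP (n - a))"
    by (simp only: dsum) (simp add: PP_def NN_def algebra_simps)
  finally show ?thesis .
qed

definition fT :: "real fps" where "fT = Abs_fps NN"
definition fQ :: "real fps" where "fQ = Abs_fps PP"
definition fS :: "real fps" where "fS = Abs_fps SS"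
definition fG :: "real fps" where "fG = fps_X * fps_deriv fT"

lemma fG_nth: "fG $ n = real n * NN n"
  by (cases n) (simp_all add: fG_def fT_def)

lemma nat_cases012: "((n::nat) = 0 \<Longrightarrow> P) \<Longrightarrow> (n = 1 \<Longrightarrow> P) \<Longrightarrow> (n \<ge> 2 \<Longrightarrow> P) \<Longrightarrow> P"
  by linarith

lemma T_eq: "fT = fps_X + fT * fT"
proof (rule fps_ext)
  fix n show "fT $ n = (fps_X + fT * fT) $ n"
  proof (rule nat_cases012[of n])
    assume "n \<ge> 2" then show ?thesis by (simp add: fT_def fps_mult_nth NN_rec)
  qed (simp_all add: fT_def NN0 NN1[unfolded One_nat_def] fps_mult_nth_1)
qed

lemma Q_eq: "fQ = (fQ + fG) * fT + fT * fQ"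
proof (rule fps_ext)
  fix n show "fQ $ n = ((fQ + fG) * fT + fT * fQ) $ n"
  proof (rule nat_cases012[of n])
    assume "n \<ge> 2" then show ?thesis
      by (simp add: fT_def fQ_def fG_nth fps_mult_nth PP_rec sum.distrib[symmetric])
  qed (simp_all add: fT_def fQ_def fG_nth NN0 NN1[unfolded One_nat_def] PP0 PP1[unfolded One_nat_def] fps_mult_nth_1)
qed

lemma S_eq: "fS = (fQ + fG) * fG + fG * fQ"
proof (rule fps_ext)
  fix n show "fS $ n = ((fQ + fG) * fG + fG * fQ) $ n"
  proof (rule nat_cases012[of n])
    assume "n \<ge> 2" then show ?thesis
      by (simp add: fS_def fQ_def fG_nth fps_mult_nth SS_rec sum.distrib[symmetric])
  qed (simp_all add: fS_def fQ_def fG_nth NN0 NN1[unfolded One_nat_def] PP0 PP1[unfolded One_nat_def] SS0 SS1[unfolded One_nat_def] fps_mult_nth_1)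
qed

lemma one_m2T_nz: "1 - 2 * fT \<noteq> 0"
proof
  assume "1 - 2 * fT = 0"
  then have "(1 - 2 * fT) $ 0 = 0" by simp
  then show False by (simp add: fT_def NN0 fps_numeral_nth)
qed

lemma S_closed: "2 * fS = fps_X ^ 2 * fps_deriv (fps_deriv fT)"
proof -
  let ?d = "fps_deriv fT" and ?dd = "fps_deriv (fps_deriv fT)"
  have d1: "?d = 1 + ?d * fT + fT * ?d"
    by (subst T_eq) (simp add: algebra_simps)
  have d2: "?dd = ?dd * fT + ?d * ?d + ?d * ?d + fT * ?dd"
    by (subst d1) (simp add: algebra_simps)
  have e1: "?dd * (1 - 2 * fT) = 2 * ?d * ?d"
    using d2 by (simp add: algebra_simps)
  have e2: "fQ * (1 - 2 * fT) = fT * fG"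
    using Q_eq by (simp add: algebra_simps)
  have e3: "fS * (1 - 2 * fT) = fG * fG"
  proof -
    have "fS * (1 - 2 * fT) = 2 * fG * (fQ * (1 - 2 * fT)) + fG * fG * (1 - 2 * fT)"
      by (subst S_eq) (simp add: algebra_simps)
    also have "\<dots> = fG * fG" by (simp only: e2) (simp add: algebra_simps)
    finally show ?thesis .
  qed
  have "(2 * fS) * (1 - 2 * fT) = (fps_X ^ 2 * ?dd) * (1 - 2 * fT)"
  proof -
    have "(fps_X ^ 2 * ?dd) * (1 - 2 * fT) = fps_X ^ 2 * (2 * ?d * ?d)"
      by (simp only: mult.assoc e1)
    also have "\<dots> = 2 * (fG * fG)" by (simp add: fG_def power2_eq_square algebra_simps)
    also have "\<dots> = (2 * fS) * (1 - 2 * fT)" by (simp add: e3 mult.assoc)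
    finally show ?thesis by (rule sym)
  qed
  then show ?thesis using one_m2T_nz by (metis mult_right_cancel)
qed

lemma SS_closed: "n \<ge> 2 \<Longrightarrow> 2 * SS n = real n * (real n - 1) * NN n"
proof -
  assume n: "n \<ge> 2"
  have "(2 * fS) $ n = (fps_X ^ 2 * fps_deriv (fps_deriv fT)) $ n" by (simp only: S_closed)
  moreover have "(2 * fS) $ n = 2 * SS n"
    by (simp add: numeral_fps_const fS_def)
  moreover have "(fps_X ^ 2 * fps_deriv (fps_deriv fT)) $ n = real (n - 1) * (real n * NN n)"
  proof -
    obtain m where m: "n = Suc (Suc m)" using n by (metis add_2_eq_Suc le_Suc_ex)
    show ?thesis by (simp add: m fps_X_power_mult_nth fT_def)
  qed
  ultimately show ?thesis using n by (simp add: of_nat_diff)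
qed




lemma gch_Suc: "(a::real) gchoose Suc k = (a gchoose k) * (a - of_nat k) / of_nat (Suc k)"
  using gbinomial_mult_1[of a k] by (simp add: field_simps)

lemma binom_step_nat: "(Suc (Suc (2 * m)) choose Suc m) * Suc m = (2 * m choose m) * (2 * (2 * m + 1))"
proof -
  have a: "Suc (Suc (2*m)) * (Suc (2*m) choose m) = (Suc (Suc (2*m)) choose Suc m) * Suc m"
    by (rule Suc_times_binomial_eq)
  have b: "Suc (2*m) * (2*m choose m) = (Suc (2*m) choose Suc m) * Suc m"
    by (rule Suc_times_binomial_eq)
  have c': "(Suc (2*m) choose Suc m) = (Suc (2*m) choose m)"
    using binomial_symmetric[of "Suc m" "Suc (2*m)"] by simp
  have "(Suc (Suc (2 * m)) choose Suc m) * Suc m * Suc m = Suc (Suc (2*m)) * (Suc (2*m) choose m) * Suc m"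
    by (simp only: a)
  also have "\<dots> = Suc (Suc (2*m)) * ((Suc (2*m) choose Suc m) * Suc m)"
    by (simp only: c' mult.assoc)
  also have "\<dots> = Suc (Suc (2*m)) * (Suc (2*m) * (2*m choose m))"
    by (simp only: b)
  also have "\<dots> = (2 * m choose m) * (2 * (2 * m + 1)) * Suc m"
    by (simp add: algebra_simps)
  finally show ?thesis by (rule mult_right_cancel[THEN iffD1, rotated]) simp
qed

lemma binom_step: "real (Suc (Suc (2 * m)) choose Suc m) * real (Suc m) = real (2 * m choose m) * (2 * (2 * real m + 1))"
proof -
  have "real ((Suc (Suc (2 * m)) choose Suc m) * Suc m) = real ((2 * m choose m) * (2 * (2 * m + 1)))"
    by (simp only: binom_step_nat)
  then show ?thesis by (simp only: of_nat_mult of_nat_add of_nat_numeral of_nat_1)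
qed

lemma half_coeff: "((1/2::real) gchoose Suc m) * (-4) ^ Suc m = -2 * real (2 * m choose m) / real (Suc m)"
proof (induction m)
  case 0 then show ?case by simp
next
  case (Suc m)
  have "((1/2::real) gchoose Suc (Suc m)) * (-4) ^ Suc (Suc m)
      = (((1/2::real) gchoose Suc m) * (-4) ^ Suc m) * ((1/2 - of_nat (Suc m)) * (-4) / of_nat (Suc (Suc m)))"
    by (simp only: gch_Suc[of _ "Suc m"] power_Suc) (simp add: field_simps)
  also have "\<dots> = -2 * real (2 * m choose m) / real (Suc m) * (2 * (2 * real m + 1) / real (Suc (Suc m)))"
  proof -
    have f: "(1/2 - of_nat (Suc m)) * (-4) = (2 * (2 * real m + 1) :: real)" by (simp add: algebra_simps)
    show ?thesis by (simp only: Suc.IH f)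
  qed
  also have "\<dots> = -2 * real (2 * Suc m choose Suc m) / real (Suc (Suc m))"
  proof -
    have "2 * Suc m = Suc (Suc (2 * m))" by simp
    then have eq: "real (2 * Suc m choose Suc m) = real (2 * m choose m) * (2 * (2 * real m + 1)) / real (Suc m)"
      using binom_step[of m] by (simp only: eq_divide_eq) simp
    show ?thesis unfolding eq by (simp add: divide_simps)
  qed
  finally show ?case .
qed

definition fV :: "real fps" where "fV = Abs_fps (\<lambda>k. ((1/2::real) gchoose k) * (-4) ^ k)"

lemma VV: "fV * fV = 1 - 4 * fps_X"
proof (rule fps_ext)
  fix n
  have "(fV * fV) $ n = (\<Sum>i = 0..n. ((1/2::real) gchoose i) * ((1/2) gchoose (n - i))) * (-4) ^ n"
    unfolding fps_mult_nth sum_distrib_right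
  proof (intro sum.cong refl)
    fix i assume "i \<in> {0..n}"
    then have "(-4::real) ^ i * (-4) ^ (n - i) = (-4) ^ n" by (simp add: power_add[symmetric])
    then show "fV $ i * fV $ (n - i) = ((1/2::real) gchoose i) * ((1/2) gchoose (n - i)) * (-4) ^ n"
      unfolding fV_def by (simp add: algebra_simps)
  qed
  also have "\<dots> = (1 gchoose n) * (-4) ^ n"
    by (subst gbinomial_Vandermonde) simp
  also have "\<dots> = (1 - 4 * fps_X) $ n"
  proof -
    have "real (1 choose n) = (of_nat 1 gchoose n)" by (rule binomial_gbinomial)
    then have "(1::real) gchoose n = real (1 choose n)" by simp
    then show ?thesis by (cases n) (auto simp: numeral_fps_const)
  qed
  finally show "(fV * fV) $ n = (1 - 4 * fps_X) $ n" .
qed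

lemma twoT: "2 * fT = 1 - fV"
proof -
  let ?A = "2 * fT" and ?W = "1 - fV"
  have hA: "?A * ?A = 2 * ?A - 4 * fps_X"
    by (subst (3) T_eq) (simp add: algebra_simps)
  have hW: "?W * ?W = 2 * ?W - 4 * fps_X"
    using VV by (simp add: algebra_simps)
  have "(?A - ?W) * (?A + ?W - 2) = ?A * ?A - ?W * ?W - 2 * ?A + 2 * ?W"
    by (simp add: algebra_simps)
  also have "\<dots> = 0" by (simp only: hA hW) simp
  finally have "(?A - ?W) * (?A + ?W - 2) = 0" .
  moreover have "?A + ?W - 2 \<noteq> 0"
  proof
    assume "?A + ?W - 2 = 0"
    then have "(?A + ?W - 2) $ 0 = 0" by simp
    then show False by (simp add: fT_def fV_def NN0 numeral_fps_const)
  qed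
  ultimately show ?thesis by simp
qed

lemma NN_closed: "n \<ge> 1 \<Longrightarrow> NN n = real ((2 * n - 2) choose (n - 1)) / real n"
proof -
  assume n: "n \<ge> 1"
  then obtain m where m: "n = Suc m" by (metis Suc_le_D One_nat_def)
  have "(2 * fT) $ n = (1 - fV) $ n" by (simp only: twoT)
  moreover have "(2 * fT) $ n = 2 * NN n" by (simp add: numeral_fps_const fT_def)
  moreover have "(1 - fV) $ n = - (fV $ n)" using m by simp
  moreover have "fV $ n = ((1/2::real) gchoose Suc m) * (-4) ^ Suc m"
    by (simp only: fV_def m fps_nth_Abs_fps)
  ultimately have "2 * NN n = 2 * real (2 * m choose m) / real (Suc m)"
    by (simp only: half_coeff)
  moreover have "2 * n - 2 = 2 * m" "n - 1 = m" using m by auto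
  ultimately show ?thesis using m by simp
qed

lemma choose2_real: "n \<ge> 1 \<Longrightarrow> 2 * real (n choose 2) = real n * (real n - 1)"
proof -
  assume n: "n \<ge> 1"
  have "2 * (n choose 2) = n * ((n - 1) choose 1)" using times_binomial_minus1_eq[of 2 n] by simp
  then have "2 * (n choose 2) = n * (n - 1)" by simp
  then have "real (2 * (n choose 2)) = real (n * (n - 1))" by (simp only:)
  then show ?thesis using n by (simp add: of_nat_diff)
qed

theorem proposition3p2:
  fixes n :: nat
  assumes "n \<ge> 2"
  shows "real (\<Sum>T \<in> {T. tsize T = n}. \<Sum>(u, w) \<in> key_pairs T. tdist u w)
         = real (n choose 2) * (real ((2 * n - 2) choose (n - 1)) / real n)"
proof -
  have "real (\<Sum>T \<in> {T. tsize T = n}. \<Sum>(u, w) \<in> key_pairs T. tdist u w) = SS n"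
    unfolding SS_def TS_def kp_def by (simp only: of_nat_sum)
  also have "\<dots> = real n * (real n - 1) * NN n / 2"
    using SS_closed[OF assms] by simp
  also have "\<dots> = real (n choose 2) * NN n"
    using choose2_real[of n] assms by simp
  also have "\<dots> = real (n choose 2) * (real ((2 * n - 2) choose (n - 1)) / real n)"
    using NN_closed[of n] assms by simp
  finally show ?thesis .
qed

end
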